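(* Let $n\ge1$. Let $\mathbf{R}$ be a subalgebra of $\mathbf{P\L}_n\times\mathbf{P\L}_n$ with $\mathbf{R}\subseteq{\le}$. Assume $\mathbf{R}$ is not the diagonal $\{(s,s):s\in S\}$ of any subalgebra $\mathbf{S}$ of $\mathbf{P\L}_n$. Put $\mathbf{S}=\mathrm{pr}_1(\mathbf{R})\times\mathrm{pr}_2(\mathbf{R})$. If $(x,y)\in\mathbf{R}$, then $C_{(x,y),\mathbf{S}}\subseteq\mathbf{R}$.
   Context: For $n\ge 1$, the algebra $\mathbf{P\L}_n=\langle\{0,\tfrac1n,\dots,\tfrac{n-1}{n},1\},\wedge,\vee,\odot,\oplus,0,1\rangle$ has $\wedge=\min$, $\vee=\max$, $x\odot y=\max\{0,x+y-1\}$ and $x\oplus y=\min\{1,x+y\}$. The order is ${\le}=\{(x,y): x\le y\}\subseteq\mathbf{P\L}_n^2$. Let $\mathbf{S}=\mathbf{S}_1\times\mathbf{S}_2$ be a product of subalgebras of $\mathbf{P\L}_n$, and let $(x,y)\in\mathbf{S}$ with $x\le y$. Define $$C_{(x,y),\mathbf{S}}=\{(x',y')\in \mathbf{S}: x'\le x\text{ and }y\le y'\}.$$ *)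

theory Defs
  imports Main "HOL.Rat"
begin

definition PL :: "nat \<Rightarrow> rat set" where
  "PL n = {of_nat k / of_nat n | k. k \<le> n}"

definition luk_odot :: "rat \<Rightarrow> rat \<Rightarrow> rat" where
  "luk_odot x y = max 0 (x + y - 1)"

definition luk_oplus :: "rat \<Rightarrow> rat \<Rightarrow> rat" where
  "luk_oplus x y = min 1 (x + y)"

definition subalg :: "nat \<Rightarrow> rat set \<Rightarrow> bool" where
  "subalg n S \<longleftrightarrow> S \<subseteq> PL n \<and> 0 \<in> S \<and> 1 \<in> S \<and>
     (\<forall>x\<in>S. \<forall>y\<in>S. min x y \<in> S \<and> max x y \<in> S \<and> luk_odot x y \<in> S \<and> luk_oplus x y \<in> S)"

definition subalg2 :: "nat \<Rightarrow> (rat \<times> rat) set \<Rightarrow> bool" where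
  "subalg2 n R \<longleftrightarrow> R \<subseteq> PL n \<times> PL n \<and> (0, 0) \<in> R \<and> (1, 1) \<in> R \<and>
     (\<forall>(x1, y1)\<in>R. \<forall>(x2, y2)\<in>R.
        (min x1 x2, min y1 y2) \<in> R \<and> (max x1 x2, max y1 y2) \<in> R \<and>
        (luk_odot x1 x2, luk_odot y1 y2) \<in> R \<and> (luk_oplus x1 x2, luk_oplus y1 y2) \<in> R)"

definition Cset :: "rat \<times> rat \<Rightarrow> (rat \<times> rat) set \<Rightarrow> (rat \<times> rat) set" where
  "Cset p S = {(x', y') \<in> S. x' \<le> fst p \<and> snd p \<le> y'}"

end

theory Submission
  imports Defs
begin

lemma PL_bounds:
  assumes "n \<ge> 1" "z \<in> PL n" shows "0 \<le> z \<and> z \<le> 1"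
proof -
  obtain k where k: "z = of_nat k / of_nat n" "k \<le> n" using assms(2) unfolding PL_def by blast
  have "(of_nat k::rat) \<le> of_nat n" using k(2) by simp
  moreover have "(of_nat n::rat) > 0" using assms(1) by simp
  ultimately show ?thesis using k(1) by (simp add: divide_le_eq_1)
qed

lemma R_bounds:
  assumes "n \<ge> 1" "subalg2 n R" "(a, b) \<in> R"
  shows "0 \<le> a \<and> a \<le> 1 \<and> 0 \<le> b \<and> b \<le> 1"
proof -
  have "a \<in> PL n" "b \<in> PL n" using assms(2,3) unfolding subalg2_def by auto
  thus ?thesis using PL_bounds[OF assms(1)] by blast
qed

lemma R_all:
  assumes "subalg2 n R" "(a,b) \<in> R" "(c,d) \<in> R"
  shows "(min a c, min b d) \<in> R \<and> (max a c, max b d) \<in> R \<and>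
     (luk_odot a c, luk_odot b d) \<in> R \<and> (luk_oplus a c, luk_oplus b d) \<in> R"
proof -
  have H: "\<forall>(x1, y1)\<in>R. \<forall>(x2, y2)\<in>R.
        (min x1 x2, min y1 y2) \<in> R \<and> (max x1 x2, max y1 y2) \<in> R \<and>
        (luk_odot x1 x2, luk_odot y1 y2) \<in> R \<and> (luk_oplus x1 x2, luk_oplus y1 y2) \<in> R"
    using assms(1) unfolding subalg2_def by (elim conjE)
  have "\<forall>(x2, y2)\<in>R.
        (min a x2, min b y2) \<in> R \<and> (max a x2, max b y2) \<in> R \<and>
        (luk_odot a x2, luk_odot b y2) \<in> R \<and> (luk_oplus a x2, luk_oplus b y2) \<in> R"
    using bspec[OF H assms(2)] by simp
  from bspec[OF this assms(3)] show ?thesis by simp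
qed

lemma R_min: "subalg2 n R \<Longrightarrow> (a,b) \<in> R \<Longrightarrow> (c,d) \<in> R \<Longrightarrow> (min a c, min b d) \<in> R"
  using R_all by blast
lemma R_max: "subalg2 n R \<Longrightarrow> (a,b) \<in> R \<Longrightarrow> (c,d) \<in> R \<Longrightarrow> (max a c, max b d) \<in> R"
  using R_all by blast
lemma R_odot: "subalg2 n R \<Longrightarrow> (a,b) \<in> R \<Longrightarrow> (c,d) \<in> R \<Longrightarrow> (luk_odot a c, luk_odot b d) \<in> R"
  using R_all by blast
lemma R_oplus: "subalg2 n R \<Longrightarrow> (a,b) \<in> R \<Longrightarrow> (c,d) \<in> R \<Longrightarrow> (luk_oplus a c, luk_oplus b d) \<in> R"
  using R_all by blast

lemma R_dbl:
  assumes "subalg2 n R" "(a,b) \<in> R"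
  shows "(min 1 (2*a), min 1 (2*b)) \<in> R" "(max 0 (2*a-1), max 0 (2*b-1)) \<in> R"
proof -
  have e: "a + a = 2*a" "b + b = 2*b" by simp_all
  show "(min 1 (2*a), min 1 (2*b)) \<in> R"
    using R_oplus[OF assms(1,2,2)] by (simp only: luk_oplus_def e)
  show "(max 0 (2*a-1), max 0 (2*b-1)) \<in> R"
    using R_odot[OF assms(1,2,2)] by (simp only: luk_odot_def e)
qed

lemma step:
  assumes "n \<ge> 1" "subalg2 n R" "(a,b) \<in> R" "a \<le> b"
  shows "\<exists>a' b'. (a',b') \<in> R \<and> b' - a' \<ge> min 1 (2*(b-a))"
proof -
  have bd: "0 \<le> a" "a \<le> 1" "0 \<le> b" "b \<le> 1" using R_bounds[OF assms(1-3)] by auto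
  note D1 = R_dbl(1)[OF assms(2,3)] and D2 = R_dbl(2)[OF assms(2,3)]
  show ?thesis
  proof (cases "b \<le> 1/2")
    case True
    have "min 1 (2*a) = 2*a" "min 1 (2*b) = 2*b" using True bd assms(4) by auto
    hence "(2*a, 2*b) \<in> R" using D1 by simp
    moreover have "min 1 (2*(b-a)) \<le> 2*b - 2*a" by simp
    ultimately show ?thesis by blast
  next
    case b: False
    show ?thesis
    proof (cases "a \<ge> 1/2")
      case True
      have "max 0 (2*a-1) = 2*a-1" "max 0 (2*b-1) = 2*b-1" using True b by auto
      hence "(2*a-1, 2*b-1) \<in> R" using D2 by simp
      moreover have "min 1 (2*(b-a)) \<le> (2*b-1) - (2*a-1)" by simp
      ultimately show ?thesis by blast
    next
      case a: False
      have "min 1 (2*a) = 2*a" "min 1 (2*b) = 1" using a b by auto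
      hence p1: "(2*a, 1) \<in> R" using D1 by simp
      have "max 0 (2*a-1) = 0" "max 0 (2*b-1) = 2*b-1" using a b by auto
      hence p2: "(0, 2*b-1) \<in> R" using D2 by simp
      show ?thesis
      proof (cases "1 - 2*a \<ge> 2*b - 1")
        case True
        have "(max 0 (2*(2*a)-1), max 0 (2*1-1)) \<in> R" using R_dbl(2)[OF assms(2) p1] .
        hence q: "(max 0 (4*a-1), 1) \<in> R" by simp
        have "min 1 (2*(b-a)) \<le> 1 - max 0 (4*a-1)"
        proof (cases "4*a-1 \<le> 0")
          case True thus ?thesis by simp
        next
          case False
          hence "max 0 (4*a-1) = 4*a-1" by simp
          moreover have "2*(b-a) \<le> 1 - (4*a-1)" using \<open>1 - 2*a \<ge> 2*b - 1\<close> by simp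
          ultimately show ?thesis by (simp add: min.coboundedI2)
        qed
        thus ?thesis using q by blast
      next
        case False
        have "(min 1 (2*0), min 1 (2*(2*b-1))) \<in> R" using R_dbl(1)[OF assms(2) p2] .
        hence q: "(0, min 1 (4*b-2)) \<in> R" by simp
        have "min 1 (2*(b-a)) \<le> min 1 (4*b-2) - 0"
          using False by (simp add: min_def)
        thus ?thesis using q by blast
      qed
    qed
  qed
qed

lemma iter:
  assumes "n \<ge> 1" "subalg2 n R" "(a,b) \<in> R" "R \<subseteq> {(a, b). a \<le> b}"
  shows "\<exists>a' b'. (a',b') \<in> R \<and> b' - a' \<ge> min 1 (2^m*(b-a))"
proof (induction m)
  case 0
  then show ?case using assms(3) by (intro exI[of _ a] exI[of _ b]) simp
next
  case (Suc m)
  then obtain a' b' where ab: "(a',b') \<in> R" "b' - a' \<ge> min 1 (2^m*(b-a))" by blast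
  obtain a2 b2 where ab2: "(a2,b2) \<in> R" "b2 - a2 \<ge> min 1 (2*(b'-a'))"
    using step[OF assms(1,2) ab(1)] ab(1) assms(4) by blast
  have "min 1 (2^Suc m*(b-a)) \<le> min 1 (2*(b'-a'))"
    using ab(2) by (auto simp: min_def split: if_splits)
  thus ?case using ab2 by (intro exI[of _ a2] exI[of _ b2]) auto
qed

lemma zero_one:
  assumes "n \<ge> 1" "subalg2 n R" "(a,b) \<in> R" "a < b" "R \<subseteq> {(a, b). a \<le> b}"
  shows "(0,1) \<in> R"
proof -
  have d: "b - a > 0" using assms(4) by simp
  obtain m :: nat where m: "1 / (b-a) < of_nat m" using reals_Archimedean2 by blast
  have "(of_nat m::rat) \<le> 2^m" 
  proof -
    have "m < 2^m" by (rule less_exp)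
    hence "(of_nat m::rat) \<le> of_nat (2^m)" by (simp only: of_nat_le_iff less_imp_le)
    thus ?thesis by simp
  qed
  hence "1 / (b-a) < 2^m" using m by linarith
  hence "1 \<le> 2^m * (b-a)" using d by (simp add: divide_less_eq)
  hence mn: "min 1 (2^m * (b-a)) = 1" by (simp add: min_absorb1)
  obtain a' b' where ab: "(a',b') \<in> R" "b' - a' \<ge> min 1 (2^m * (b-a))"
    using iter[OF assms(1,2,3,5), of m] by blast
  hence ab: "(a',b') \<in> R" "b' - a' \<ge> 1" using mn by auto
  have "0 \<le> a'" "b' \<le> 1" using R_bounds[OF assms(1,2) ab(1)] by auto
  hence "a' = 0" "b' = 1" using ab(2) by auto
  thus ?thesis using ab(1) by simp
qed

theorem lemma3p11:
  fixes n :: nat and R :: "(rat \<times> rat) set" and x y :: rat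
  assumes "n \<ge> 1"
    and "subalg2 n R"
    and "R \<subseteq> {(a, b). a \<le> b}"
    and "\<not> (\<exists>S. subalg n S \<and> R = {(s, s) | s. s \<in> S})"
    and "(x, y) \<in> R"
  shows "Cset (x, y) (fst ` R \<times> snd ` R) \<subseteq> R"
proof -
  have "\<exists>a b. (a,b) \<in> R \<and> a \<noteq> b"
  proof (rule ccontr)
    assume "\<not> ?thesis"
    hence diag: "\<And>a b. (a,b) \<in> R \<Longrightarrow> a = b" by blast
    have eq: "R = {(s, s) | s. s \<in> fst ` R}"
      using diag by force
    have mem: "s \<in> fst ` R \<longleftrightarrow> (s,s) \<in> R" for s using diag by force
    have "subalg n (fst ` R)"
      unfolding subalg_def
    proof (intro conjI ballI)
      show "fst ` R \<subseteq> PL n" using assms(2) unfolding subalg2_def by auto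
      show "0 \<in> fst ` R" "1 \<in> fst ` R" using assms(2) mem unfolding subalg2_def by auto
    next
      fix s t assume "s \<in> fst ` R" "t \<in> fst ` R"
      hence st: "(s,s) \<in> R" "(t,t) \<in> R" using mem by auto
      show "min s t \<in> fst ` R" using R_min[OF assms(2) st] mem by blast
      show "max s t \<in> fst ` R" using R_max[OF assms(2) st] mem by blast
      show "luk_odot s t \<in> fst ` R" using R_odot[OF assms(2) st] mem by blast
      show "luk_oplus s t \<in> fst ` R" using R_oplus[OF assms(2) st] mem by blast
    qed
    thus False using assms(4) eq by blast
  qed
  then obtain a b where ab: "(a,b) \<in> R" "a \<noteq> b" by blast
  hence "a < b" using assms(3) by force
  have z1: "(0,1) \<in> R" using zero_one[OF assms(1,2) ab(1) \<open>a < b\<close> assms(3)] .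
  show ?thesis
  proof
    fix p assume "p \<in> Cset (x, y) (fst ` R \<times> snd ` R)"
    then obtain x' y' u v where p: "p = (x',y')" "(x',u) \<in> R" "(v,y') \<in> R" "x' \<le> x" "y \<le> y'"
      unfolding Cset_def by force
    have b1: "0 \<le> x'" "u \<le> 1" using R_bounds[OF assms(1,2) p(2)] by auto
    have b2: "0 \<le> v" "y' \<le> 1" using R_bounds[OF assms(1,2) p(3)] by auto
    have q1: "(x', 1) \<in> R" using R_max[OF assms(2) p(2) z1] b1 by (simp add: max_def)
    have q2: "(0, y') \<in> R" using R_min[OF assms(2) p(3) z1] b2 by (simp add: min_absorb2 min_absorb1)
    have q3: "(x, y') \<in> R" using R_max[OF assms(2) assms(5) q2] R_bounds[OF assms(1,2,5)] p(5)
      by (simp add: max_absorb1 max_absorb2)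
    have "(x', y') \<in> R" using R_min[OF assms(2) q1 q3] p(4) b2 by (simp add: min_def)
    thus "p \<in> R" using p(1) by simp
  qed
qed

end
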